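(* An Ehresmann connection $\gamma$ on $M\times_NC$ satisfies condition $(C_M)$: $\gamma_M((g_x,\Gamma_x),X)=X-q_*\big(((p_M)_*X)^{h_{\Gamma_x}}_u\big)$ for all $X\in T_{g_x}M$ and $u\in q^{-1}(g_x)$, if and only if, in every induced coordinate system, $\gamma_{klj}=-(y_{al}A^a_{jk}+y_{ak}A^a_{jl})$ for all $j,k,l$.
   Context: $N$ is a connected oriented $n$-manifold, $p_M\colon M\to N$ the bundle of pseudo-Riemannian metrics of a fixed signature $(n^+,n^-)$, $p_C\colon C\to N$ the bundle of linear connections (fibre over $x$: values $\Gamma_x$ at $x$ of linear connections), $p_F\colon F(N)\to N$ the linear frame bundle. Summation over repeated indices. A chart $(x^i)$ induces coordinates $(x^i,y_{ij})$ on $M$ ($y_{ij}=y_{ji}$, $y_{ij}(g_x)=g_x(\partial_i,\partial_j)$), $(x^i,A^i_{jk})$ on $C$ ($A^i_{jk}(\Gamma_x)=\Gamma^i_{jk}(x)$, Christoffel symbols with $\nabla_{\partial_j}\partial_k=\Gamma^i_{jk}\partial_i$), and $(x^i,x^i_j)$ on $F(N)$ (a frame is $X_j=x^i_j\partial_i$). An Ehresmann connection on $p\colon M\times_NC\to N$ is a $V(p)$-valued 1-form $\gamma$ with $\gamma(X)=X$ for vertical $X$; locally $\gamma=\sum_{i\le j}(dy_{ij}+\gamma_{ijk}dx^k)\otimes\partial/\partial y_{ij}+(dA^i_{jk}+\gamma^i_{jkl}dx^l)\otimes\partial/\partial A^i_{jk}$, and $\gamma_M=\sum_{i\le j}(dy_{ij}+\gamma_{ijk}dx^k)\otimes\partial/\partial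 y_{ij}$ is its $M$-component, viewed as a map $\gamma_M\colon \mathrm{pr}_1^*TM\to\mathrm{pr}_1^*V(p_M)$ (so $\gamma_M((g_x,\Gamma_x),X)$ makes sense for $X\in T_{g_x}M$). The map $q\colon F(N)\to M$ sends a frame with dual coframe $(w^h)$ to $\sum_h\varepsilon_hw^h\otimes w^h$, $\varepsilon_h=1$ for $h\le n^+$, $-1$ otherwise. For $Y\in T_xN$ and $u\in F_x(N)$, $Y^{h_{\Gamma_x}}_u$ is the horizontal lift at $u$ with respect to (any connection with value) $\Gamma_x$; locally $(\partial/\partial x^j)^{h_\Gamma}_u=\partial/\partial x^j-\Gamma^i_{jk}x^k_l\,\partial/\partial x^i_l$. The right-hand side of $(C_M)$ does not depend on the choice of $u\in q^{-1}(g_x)$. *)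

theory Defs
  imports "HOL-Analysis.Analysis"
begin

text \<open>Local coordinate model over one chart (x^i) of N, with index type 'n
 (linearly ordered, so that the coordinates y_ij with i <= j make sense and the
 frame index h can be compared with n^+).
 Matrices are real^'n^'n with M $ row $ col.
 - a metric value g_x is the matrix y with y $ i $ j = y_ij;
 - a connection value Gamma_x is A with A i j k = A^i_jk = Gamma^i_jk;
 - a frame u is the invertible matrix E with E $ i $ l = x^i_l (X_l = x^i_l d_i);
 - a tangent vector to M at g_x is (xi, eta): xi $ k the dx^k-component and
   eta the symmetric matrix of the dy_ij-components;
 - a tangent vector to F(N) at u is (xi, dE), dE $ i $ l the dx^i_l-component.\<close>

type_synonym 'n vect = "real^'n"
type_synonym 'n mat = "real^'n^'n"
type_synonym 'n tvec = "(real^'n) \<times> (real^'n^'n)"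

definition sym_mat :: "'n::finite mat \<Rightarrow> bool" where
  "sym_mat y \<longleftrightarrow> transpose y = y"

definition posdef_on :: "'n::finite mat \<Rightarrow> (real^'n) set \<Rightarrow> bool" where
  "posdef_on y V \<longleftrightarrow> (\<forall>v\<in>V. v \<noteq> 0 \<longrightarrow> v \<bullet> (y *v v) > 0)"

text \<open>Fibre of the bundle of pseudo-Riemannian metrics of signature
 (npos, n - npos): nondegenerate symmetric matrices whose maximal
 positive definite subspaces have dimension npos (index of positivity).\<close>
definition metric_fibre :: "nat \<Rightarrow> ('n::finite mat) set" where
  "metric_fibre npos = {y. sym_mat y \<and> det y \<noteq> 0 \<and>
      npos = Max {dim V | V. subspace V \<and> posdef_on y V}}"

text \<open>epsilon_h = 1 for the first npos frame indices, -1 otherwise.\<close>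
definition eps :: "nat \<Rightarrow> 'n::{finite,linorder} \<Rightarrow> real" where
  "eps npos h = (if card {h'. h' \<le> h} \<le> npos then 1 else -1)"

text \<open>q in fibre coordinates: the coframe (w^h) dual to the frame E is given by
 the rows of E^{-1}, w^h(d_a) = E^{-1} $ h $ a; q(u) = sum_h eps_h w^h (x) w^h.\<close>
definition qmat :: "nat \<Rightarrow> ('n::{finite,linorder}) mat \<Rightarrow> 'n mat" where
  "qmat npos E = (let W = matrix_inv E in
      (\<chi> a b. \<Sum>h\<in>UNIV. eps npos h * W $ h $ a * W $ h $ b))"

text \<open>Horizontal lift at the frame E of xi = xi^j d_j w.r.t. the connection value A:
 xi^j (d_j - Gamma^i_jk x^k_l d/dx^i_l).\<close>
definition hlift :: "('n::finite \<Rightarrow> 'n \<Rightarrow> 'n \<Rightarrow> real) \<Rightarrow> 'n mat \<Rightarrow> real^'n \<Rightarrow> 'n tvec" where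
  "hlift A E xi = (xi, (\<chi> i l. - (\<Sum>j\<in>UNIV. \<Sum>k\<in>UNIV. A i j k * E $ k $ l * xi $ j)))"

text \<open>Differential at the frame E of q, which in coordinates is (x,E) |-> (x, qmat E).\<close>
definition qstar :: "nat \<Rightarrow> ('n::{finite,linorder}) mat \<Rightarrow> 'n tvec \<Rightarrow> 'n tvec" where
  "qstar npos E v = (fst v, frechet_derivative (qmat npos) (at E) (snd v))"

text \<open>M-component gamma_M of the Ehresmann connection at a point, with
 coefficients G i j k = gamma_ijk (only the entries with i <= j are used),
 applied to X = (xi, eta). The result is the vertical vector
 sum_{i<=j} (eta_ij + gamma_ijk xi^k) d/dy_ij, written as a symmetric matrix.\<close>
definition gammaM :: "('n::{finite,linorder} \<Rightarrow> 'n \<Rightarrow> 'n \<Rightarrow> real) \<Rightarrow> 'n tvec \<Rightarrow> 'n tvec" where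
  "gammaM G X = (0, (\<chi> i j. snd X $ i $ j +
        (\<Sum>k\<in>UNIV. G (min i j) (max i j) k * fst X $ k)))"

definition CM_at :: "nat \<Rightarrow> ('n::{finite,linorder} \<Rightarrow> 'n \<Rightarrow> 'n \<Rightarrow> real) \<Rightarrow> 'n mat
                     \<Rightarrow> ('n \<Rightarrow> 'n \<Rightarrow> 'n \<Rightarrow> real) \<Rightarrow> bool" where
  "CM_at npos G y A \<longleftrightarrow>
     (\<forall>xi eta E. sym_mat eta \<longrightarrow> invertible E \<longrightarrow> qmat npos E = y \<longrightarrow>
        gammaM G (xi, eta) = (xi, eta) - qstar npos E (hlift A E xi))"

end

theory Submission
  imports Defs
begin


lemma mm_rdistrib: "((A::real^'n^'m) + B) ** (C::real^'k^'n) = A ** C + B ** C"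
  by (simp add: matrix_matrix_mult_def vec_eq_iff distrib_right sum.distrib)

lemma mm_ldiff: "(A::real^'n^'m) ** ((B::real^'k^'n) - C) = A ** B - A ** C"
  by (simp add: matrix_matrix_mult_def vec_eq_iff right_diff_distrib sum_subtractf)

lemma mm_rdiff: "((A::real^'n^'m) - B) ** (C::real^'k^'n) = A ** C - B ** C"
  by (simp add: matrix_matrix_mult_def vec_eq_iff left_diff_distrib sum_subtractf)

lemma mm_uminus_left: "(- (A::real^'n^'m)) ** (C::real^'k^'n) = - (A ** C)"
  by (simp add: matrix_matrix_mult_def vec_eq_iff sum_negf)

lemma mm_scaleR: "(r *\<^sub>R (A::real^'n^'m)) ** (C::real^'k^'n) = r *\<^sub>R (A ** C)"
  by (simp add: matrix_matrix_mult_def vec_eq_iff sum_distrib_left mult.assoc)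

lemma bilinear_mm: "bilinear ((**) :: real^'n^'m \<Rightarrow> real^'k^'n \<Rightarrow> real^'k^'m)"
  unfolding bilinear_def
  by (auto intro!: linearI simp: matrix_add_ldistrib mm_rdistrib matrix_scalar_ac mm_scaleR)

lemma bb_mm: "bounded_bilinear ((**) :: real^'n^'m \<Rightarrow> real^'k^'n \<Rightarrow> real^'k^'m)"
  using bilinear_mm bilinear_conv_bounded_bilinear by blast

lemma inv_props:
  assumes "invertible (E::real^'n^'n)"
  shows "E ** matrix_inv E = mat 1" "matrix_inv E ** E = mat 1"
proof -
  have "\<exists>A'. E ** A' = mat 1 \<and> A' ** E = mat 1" using assms invertible_def by blast
  hence "E ** matrix_inv E = mat 1 \<and> matrix_inv E ** E = mat 1"
    unfolding matrix_inv_def by (rule someI_ex)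
  thus "E ** matrix_inv E = mat 1" "matrix_inv E ** E = mat 1" by auto
qed

lemma mv_axis: "((A::real^'n^'m) *v axis l 1) $ k = A $ k $ l"
  by (simp add: matrix_vector_mult_def axis_def if_distrib cong: if_cong)

lemma inv_cramer:
  assumes "invertible (X::real^'n^'n)"
  shows "matrix_inv X = (\<chi> k l. det(\<chi> i j. if j=k then axis l (1::real) $ i else X$i$j)/det X)"
proof -
  have d: "det X \<noteq> 0" using assms invertible_det_nz by blast
  have "X *v (matrix_inv X *v axis l 1) = axis l 1" for l
    by (simp add: matrix_vector_mul_assoc inv_props[OF assms])
  hence H: "matrix_inv X *v axis l 1 = (\<chi> k. det(\<chi> i j. if j=k then axis l (1::real) $ i else X$i$j) / det X)" for l
    using cramer[OF d] by blast
  have "matrix_inv X $ k $ l = det(\<chi> i j. if j=k then axis l (1::real) $ i else X$i$j) / det X" for k l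
  proof -
    have "(matrix_inv X *v axis l 1) $ k = det(\<chi> i j. if j=k then axis l (1::real) $ i else X$i$j) / det X"
      by (simp only: H vec_lambda_beta)
    thus ?thesis by (simp only: mv_axis)
  qed
  thus ?thesis by (simp add: vec_eq_iff)
qed

lemma isCont_det: "isCont (det :: real^'n^'n \<Rightarrow> real) X"
proof -
  have "continuous_on UNIV (det :: real^'n^'n \<Rightarrow> real)"
    unfolding det_def by (intro continuous_intros)
  thus ?thesis by (simp add: continuous_on_eq_continuous_at)
qed

lemma inv_cont:
  assumes "invertible (E::real^'n^'n)"
  shows "((\<lambda>h. matrix_inv (E + h)) \<longlongrightarrow> matrix_inv E) (at 0)"
proof -
  define g where "g = (\<lambda>X::real^'n^'n. (\<chi> k l. det(\<chi> i j. if j=k then axis l (1::real) $ i else X$i$j)/det X))"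
  have dE: "det E \<noteq> 0" using assms invertible_det_nz by blast
  have cd: "((\<lambda>h. det (f h)) \<longlongrightarrow> det (f 0)) (at 0)" if "(f \<longlongrightarrow> f 0) (at (0::real^'n^'n))" for f :: "real^'n^'n \<Rightarrow> real^'n^'n"
    using isCont_tendsto_compose[OF isCont_det that] .
  have tE: "((\<lambda>h. E + h) \<longlongrightarrow> E + 0) (at (0::real^'n^'n))"
    by (intro tendsto_intros)
  have td: "((\<lambda>h. det (E + h)) \<longlongrightarrow> det E) (at 0)"
    using cd[of "\<lambda>h. E + h"] tE by simp
  have tg: "((\<lambda>h. g (E + h)) \<longlongrightarrow> g E) (at 0)"
    unfolding g_def
  proof (intro tendsto_intros)
    show "det E \<noteq> 0" using dE .
    show "((\<lambda>h. det (E + h)) \<longlongrightarrow> det E) (at 0)" by (rule td)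
    fix k l
    let ?f = "\<lambda>h::real^'n^'n. (\<chi> i j. if j=k then axis l (1::real) $ i else (E+h)$i$j)"
    have "(?f \<longlongrightarrow> ?f 0) (at 0)"
    proof (intro tendsto_vec_lambda)
      fix i j show "((\<lambda>h. if j=k then axis l (1::real) $ i else (E+h)$i$j) \<longlongrightarrow> (if j=k then axis l (1::real) $ i else (E+0)$i$j)) (at 0)"
      proof (cases "j = k")
        case True thus ?thesis by simp
      next
        case False thus ?thesis by (simp only: if_not_P[OF False] if_False) (intro tendsto_intros)
      qed
    qed
    thus "((\<lambda>h. det (?f h)) \<longlongrightarrow> det (\<chi> i j. if j=k then axis l (1::real) $ i else E$i$j)) (at 0)"
      using cd[of ?f] by (simp only: add.right_neutral)
  qed
  have ev: "eventually (\<lambda>h. det (E + h) \<noteq> 0) (at (0::real^'n^'n))"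
    using tendsto_imp_eventually_ne[OF td dE] .
  have ev2: "eventually (\<lambda>h. g (E + h) = matrix_inv (E + h)) (at (0::real^'n^'n))"
    using ev proof eventually_elim
    case (elim h)
    then have "invertible (E+h)" by (simp add: invertible_det_nz)
    show ?case by (simp only: g_def inv_cramer[OF \<open>invertible (E+h)\<close>])
  qed
  have gE: "g E = matrix_inv E" by (simp only: g_def inv_cramer[OF assms])
  have "((\<lambda>h. matrix_inv (E + h)) \<longlongrightarrow> g E) (at 0)" by (rule Lim_transform_eventually[OF tg ev2])
  thus ?thesis by (simp only: gE)
qed



lemma aux_grp: "V = X \<Longrightarrow> W = X + Y \<Longrightarrow> V - W = - (Y::'a::ab_group_add)" by simp

lemma inv_identity:
  assumes "invertible (E::real^'n^'n)" "invertible (E + h)"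
  shows "matrix_inv (E + h) - matrix_inv E - (- (matrix_inv E ** h ** matrix_inv E))
       = - ((matrix_inv (E + h) - matrix_inv E) ** h ** matrix_inv E)"
proof -
  define V where "V = matrix_inv (E + h)"
  define W where "W = matrix_inv E"
  have EW: "E ** W = mat 1" using inv_props[OF assms(1)] W_def by simp
  have VE: "V ** (E + h) = mat 1" using inv_props[OF assms(2)] V_def by simp
  have "V = (V ** E) ** W" by (simp add: EW flip: matrix_mul_assoc)
  moreover have "W = (V ** E) ** W + (V ** h) ** W"
  proof -
    have "W = (V ** (E + h)) ** W" by (simp add: VE)
    also have "\<dots> = (V ** E) ** W + (V ** h) ** W" by (simp add: matrix_add_ldistrib mm_rdistrib)
    finally show ?thesis .
  qed
  ultimately have "V - W = - ((V ** h) ** W)" by (rule aux_grp)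
  hence "V - W - (- (W ** h ** W)) = - (V ** h ** W) + W ** h ** W" by simp
  also have "\<dots> = - ((V - W) ** h ** W)" by (simp add: mm_rdiff)
  finally show ?thesis unfolding V_def W_def .
qed

lemma inv_deriv:
  assumes "invertible (E::real^'n^'n)"
  shows "(matrix_inv has_derivative (\<lambda>h. - (matrix_inv E ** h ** matrix_inv E))) (at E)"
proof -
  define W where "W = matrix_inv E"
  obtain K where K: "K > 0" "\<And>a b. norm ((a::real^'n^'n) ** (b::real^'n^'n)) \<le> norm a * norm b * K"
    using bounded_bilinear.pos_bounded[OF bb_mm] by blast
  have bl: "bounded_linear (\<lambda>h. - (W ** h ** W))"
  proof -
    have "bounded_linear (\<lambda>h::real^'n^'n. W ** h)" by (rule bounded_bilinear.bounded_linear_right[OF bb_mm])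
    moreover have "bounded_linear (\<lambda>h::real^'n^'n. h ** W)" by (rule bounded_bilinear.bounded_linear_left[OF bb_mm])
    ultimately have "bounded_linear (\<lambda>h. (W ** h) ** W)" using bounded_linear_compose[of "\<lambda>h. h ** W" "\<lambda>h. W ** h"] by simp
    thus ?thesis by (rule bounded_linear_minus)
  qed
  have dE: "det E \<noteq> 0" using assms invertible_det_nz by blast
  have td: "((\<lambda>h. det (E + h)) \<longlongrightarrow> det E) (at 0)"
  proof -
    have "((\<lambda>h. E + h) \<longlongrightarrow> E + 0) (at (0::real^'n^'n))" by (intro tendsto_intros)
    hence "((\<lambda>h. E + h) \<longlongrightarrow> E) (at (0::real^'n^'n))" by simp
    thus ?thesis using isCont_tendsto_compose[OF isCont_det] by blast
  qed
  have ev: "eventually (\<lambda>h. det (E + h) \<noteq> 0) (at (0::real^'n^'n))"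
    using tendsto_imp_eventually_ne[OF td dE] .
  have lim0: "((\<lambda>h. K * K * norm W * norm (matrix_inv (E + h) - W)) \<longlongrightarrow> 0) (at 0)"
  proof -
    have "((\<lambda>h. matrix_inv (E + h) - W) \<longlongrightarrow> 0) (at 0)"
      using tendsto_diff[OF inv_cont[OF assms] tendsto_const[of W]] unfolding W_def by simp
    hence "((\<lambda>h. norm (matrix_inv (E + h) - W)) \<longlongrightarrow> 0) (at 0)" by (rule tendsto_norm_zero)
    thus ?thesis by (rule tendsto_mult_right_zero)
  qed
  have "((\<lambda>h. norm (matrix_inv (E + h) - matrix_inv E - (- (W ** h ** W))) / norm h) \<longlongrightarrow> 0) (at 0)"
  proof (rule Lim_null_comparison[OF _ lim0])
    show "eventually (\<lambda>h. norm (norm (matrix_inv (E + h) - matrix_inv E - (- (W ** h ** W))) / norm h)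
         \<le> K * K * norm W * norm (matrix_inv (E + h) - W)) (at 0)"
      using ev
    proof eventually_elim
      case (elim h)
      hence inv: "invertible (E + h)" by (simp add: invertible_det_nz)
      let ?D = "matrix_inv (E + h) - W"
      have eq: "matrix_inv (E + h) - matrix_inv E - (- (W ** h ** W)) = - (?D ** h ** W)"
        using inv_identity[OF assms inv] unfolding W_def .
      have "norm (?D ** h ** W) \<le> norm (?D ** h) * norm W * K" by (rule K(2))
      also have "\<dots> \<le> (norm ?D * norm h * K) * norm W * K"
        using K by (intro mult_right_mono K(2)) auto
      finally have n1: "norm (?D ** h ** W) \<le> K * K * norm W * norm ?D * norm h" by (simp add: algebra_simps)
      show ?case
      proof (cases "h = 0")
        case True thus ?thesis using K by simp
      next
        case False
        hence "norm h > 0" by simp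
        thus ?thesis unfolding eq norm_minus_cancel using n1 by (simp add: divide_le_eq)
      qed
    qed
  qed
  thus ?thesis using bl unfolding has_derivative_at W_def by simp
qed



definition Smat :: "nat \<Rightarrow> ('n::{finite,linorder}) mat" where
  "Smat npos = (\<chi> i j. if i = j then eps npos i else 0)"

definition Bmat :: "('n::finite \<Rightarrow> 'n \<Rightarrow> 'n \<Rightarrow> real) \<Rightarrow> real^'n \<Rightarrow> real^'n^'n" where
  "Bmat A xi = (\<chi> c a. \<Sum>j\<in>UNIV. A c j a * xi $ j)"

lemma mm_uminus_right: "(A::real^'n^'m) ** (- (C::real^'k^'n)) = - (A ** C)"
  by (simp add: matrix_matrix_mult_def vec_eq_iff sum_negf)

lemma transpose_uminus: "transpose (- (A::real^'n^'m)) = - transpose A"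
  by (simp add: transpose_def vec_eq_iff)

lemma Smat_mult: "(Smat npos ** W) $ h $ b = eps npos h * W $ h $ b"
  by (simp add: Smat_def matrix_matrix_mult_def if_distrib[of "\<lambda>x. x * _"] cong: if_cong)

lemma tmult: "(transpose (X::real^'n^'m) ** (Y::real^'k^'m)) $ a $ b = (\<Sum>h\<in>UNIV. X $ h $ a * Y $ h $ b)"
  by (simp add: matrix_matrix_mult_def transpose_def)

lemma qmat_eq: "qmat npos E = transpose (matrix_inv E) ** (Smat npos ** matrix_inv E)"
  by (simp add: qmat_def Let_def vec_eq_iff tmult Smat_mult mult_ac)

lemma linear_transpose: "linear (transpose :: real^'n^'m \<Rightarrow> real^'m^'n)"
  by (auto intro!: linearI simp: transpose_def vec_eq_iff)

lemma bl_transpose: "bounded_linear (transpose :: real^'n^'m \<Rightarrow> real^'m^'n)"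
  using linear_transpose linear_conv_bounded_linear by blast

lemma qmat_deriv:
  assumes "invertible (E::('n::{finite,linorder}) mat)"
  shows "(qmat npos has_derivative (\<lambda>H. transpose (matrix_inv E) ** (Smat npos ** (- (matrix_inv E ** H ** matrix_inv E)))
          + transpose (- (matrix_inv E ** H ** matrix_inv E)) ** (Smat npos ** matrix_inv E))) (at E)"
proof -
  have d1: "(matrix_inv has_derivative (\<lambda>h. - (matrix_inv E ** h ** matrix_inv E))) (at E)"
    by (rule inv_deriv[OF assms])
  have d2: "((\<lambda>X. transpose (matrix_inv X)) has_derivative (\<lambda>h. transpose (- (matrix_inv E ** h ** matrix_inv E)))) (at E)"
    by (rule bounded_linear.has_derivative[OF bl_transpose d1])
  have d3: "((\<lambda>X. Smat npos ** matrix_inv X) has_derivative (\<lambda>h. Smat npos ** (- (matrix_inv E ** h ** matrix_inv E)))) (at E)"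
    by (rule bounded_linear.has_derivative[OF bounded_bilinear.bounded_linear_right[OF bb_mm] d1])
  have qeq: "qmat npos = (\<lambda>X. transpose (matrix_inv X) ** (Smat npos ** matrix_inv X))"
    by (rule ext) (rule qmat_eq)
  show ?thesis unfolding qeq by (rule bounded_bilinear.FDERIV[OF bb_mm d2 d3])
qed

lemma hlift_snd: "snd (hlift A E xi) = - (Bmat A xi ** E)"
proof -
  have "(\<Sum>j\<in>UNIV. \<Sum>k\<in>UNIV. A i j k * E $ k $ l * xi $ j) = (\<Sum>k\<in>UNIV. (\<Sum>j\<in>UNIV. A i j k * xi $ j) * E $ k $ l)" for i l
    by (subst sum.swap) (simp add: sum_distrib_left sum_distrib_right mult_ac)
  thus ?thesis by (simp add: hlift_def Bmat_def vec_eq_iff matrix_matrix_mult_def sum_negf)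
qed

lemma D_formula:
  assumes "invertible (E::('n::{finite,linorder}) mat)"
  shows "frechet_derivative (qmat npos) (at E) (snd (hlift A E xi))
       = qmat npos E ** Bmat A xi + transpose (Bmat A xi) ** qmat npos E"
proof -
  define W where "W = matrix_inv E"
  define B where "B = Bmat A xi"
  define S where "S = (Smat npos :: 'n mat)"
  have EW: "E ** W = mat 1" using inv_props[OF assms] W_def by simp
  have fd: "frechet_derivative (qmat npos) (at E) = (\<lambda>H. transpose W ** (S ** (- (W ** H ** W)))
          + transpose (- (W ** H ** W)) ** (S ** W))"
    using frechet_derivative_at[OF qmat_deriv[OF assms]] unfolding W_def S_def by simp
  have WdW: "W ** (- (B ** E)) ** W = - (W ** B)"
  proof -
    have "W ** (- (B ** E)) ** W = - ((W ** B) ** (E ** W))"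
      by (simp add: mm_uminus_right mm_uminus_left matrix_mul_assoc)
    thus ?thesis by (simp add: EW)
  qed
  have y: "qmat npos E = transpose W ** (S ** W)" unfolding W_def S_def by (rule qmat_eq)
  have "frechet_derivative (qmat npos) (at E) (snd (hlift A E xi))
      = transpose W ** (S ** (W ** B)) + transpose (W ** B) ** (S ** W)"
    unfolding fd hlift_snd B_def[symmetric] WdW by simp
  also have "\<dots> = (transpose W ** (S ** W)) ** B + transpose B ** (transpose W ** (S ** W))"
    by (simp add: matrix_transpose_mul matrix_mul_assoc)
  finally show ?thesis unfolding y B_def .
qed



lemma Bsym:
  assumes "sym_mat (y::real^'n^'n)"
  shows "u \<bullet> (y *v v) = v \<bullet> (y *v u)"
proof -
  have "u \<bullet> (y *v v) = (u v* y) \<bullet> v" by (simp add: dot_lmul_matrix)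
  also have "u v* y = transpose y *v u" by simp
  also have "transpose y = y" using assms by (simp add: sym_mat_def)
  finally show ?thesis by (simp add: inner_commute)
qed

lemma Bzero_on:
  assumes "sym_mat (y::real^'n^'n)" "subspace V" "\<forall>v\<in>V. v \<bullet> (y *v v) = 0" "u \<in> V" "w \<in> V"
  shows "u \<bullet> (y *v w) = 0"
proof -
  have "(u + w) \<bullet> (y *v (u + w)) = 0" using assms by (simp add: subspace_add)
  hence "u \<bullet> (y *v u) + u \<bullet> (y *v w) + w \<bullet> (y *v u) + w \<bullet> (y *v w) = 0"
    by (simp add: matrix_vector_right_distrib inner_add_left inner_add_right algebra_simps)
  moreover have "u \<bullet> (y *v u) = 0" "w \<bullet> (y *v w) = 0" using assms by auto
  moreover have "w \<bullet> (y *v u) = u \<bullet> (y *v w)" using Bsym[OF assms(1)] by metis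
  ultimately show ?thesis by simp
qed

lemma orth_basis:
  assumes sy: "sym_mat (y::real^'n^'n)"
  shows "subspace V \<Longrightarrow> \<exists>T. T \<subseteq> V \<and> independent T \<and> V \<subseteq> span T \<and>
           (\<forall>u\<in>T. \<forall>v\<in>T. u \<noteq> v \<longrightarrow> u \<bullet> (y *v v) = 0)"
proof (induction "dim V" arbitrary: V rule: less_induct)
  case less
  show ?case
  proof (cases "\<forall>v\<in>V. v \<bullet> (y *v v) = 0")
    case True
    obtain T where T: "T \<subseteq> V" "independent T" "V \<subseteq> span T" "card T = dim V"
      by (rule basis_exists)
    have "\<forall>u\<in>T. \<forall>v\<in>T. u \<noteq> v \<longrightarrow> u \<bullet> (y *v v) = 0"
      using Bzero_on[OF sy less.prems True] T(1) by blast
    thus ?thesis using T by blast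
  next
    case False
    then obtain v where v: "v \<in> V" "v \<bullet> (y *v v) \<noteq> 0" by blast
    define V' where "V' = {w \<in> V. v \<bullet> (y *v w) = 0}"
    have sV': "subspace V'"
      unfolding subspace_def V'_def using less.prems
      by (auto simp: subspace_0 subspace_add subspace_scale matrix_vector_right_distrib inner_add_right
          matrix_vector_mult_scaleR)
    have V'V: "V' \<subseteq> V" by (auto simp: V'_def)
    have vV': "v \<notin> V'" using v by (simp add: V'_def)
    have "span V' \<subset> span V"
    proof
      show "span V' \<subseteq> span V" using V'V by (rule span_mono)
      show "span V' \<noteq> span V"
      proof
        assume "span V' = span V"
        hence "V' = V" using sV' less.prems by (metis span_eq_iff)
        thus False using v vV' by blast
      qed
    qed
    hence "dim V' < dim V" by (rule dim_psubset)
    then obtain T' where T': "T' \<subseteq> V'" "independent T'" "V' \<subseteq> span T'"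
      "\<forall>u\<in>T'. \<forall>w\<in>T'. u \<noteq> w \<longrightarrow> u \<bullet> (y *v w) = 0"
      using less.hyps[OF _ sV'] by blast
    have spT': "span T' \<subseteq> V'" using T'(1) sV' by (rule span_minimal)
    define T where "T = insert v T'"
    have "T \<subseteq> V" using T'(1) V'V v by (auto simp: T_def)
    moreover have "independent T"
  proof -
    have "v \<notin> span T'" using spT' vV' by blast
    thus ?thesis unfolding T_def using T'(2) by (rule independent_insertI)
  qed
    moreover have "V \<subseteq> span T"
    proof
      fix w assume w: "w \<in> V"
      define c where "c = (v \<bullet> (y *v w)) / (v \<bullet> (y *v v))"
      have "w - c *\<^sub>R v \<in> V'"
        using w v less.prems unfolding V'_def c_def
        by (auto simp: subspace_diff subspace_scale matrix_vector_mult_diff_distrib inner_diff_right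
            matrix_vector_mult_scaleR)
      hence "w - c *\<^sub>R v \<in> span T" using T'(3) span_mono[of T' T] by (auto simp: T_def)
      moreover have "c *\<^sub>R v \<in> span T" by (simp add: T_def span_base span_scale)
      ultimately have "(w - c *\<^sub>R v) + c *\<^sub>R v \<in> span T" by (rule span_add)
      thus "w \<in> span T" by simp
    qed
    moreover have "\<forall>u\<in>T. \<forall>w\<in>T. u \<noteq> w \<longrightarrow> u \<bullet> (y *v w) = 0"
    proof (intro ballI impI)
      fix u w assume u: "u \<in> T" and w: "w \<in> T" and uw: "u \<noteq> w"
      have vt: "v \<bullet> (y *v t) = 0" if "t \<in> T'" for t using that T'(1) by (auto simp: V'_def)
      show "u \<bullet> (y *v w) = 0"
      proof (cases "u = v")
        case True
        thus ?thesis using w uw vt by (auto simp: T_def)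
      next
        case False
        hence u': "u \<in> T'" using u by (auto simp: T_def)
        show ?thesis
        proof (cases "w = v")
          case True thus ?thesis using vt[OF u'] Bsym[OF sy, of u v] by simp
        next
          case False
          hence "w \<in> T'" using w by (auto simp: T_def)
          thus ?thesis using T'(4) u' uw by blast
        qed
      qed
    qed
    ultimately show ?thesis by blast
  qed
qed

lemma nondeg:
  assumes sy: "sym_mat (y::real^'n^'n)" and dy: "det y \<noteq> 0"
    and T: "independent T" "UNIV \<subseteq> span T" "\<forall>u\<in>T. \<forall>v\<in>T. u \<noteq> v \<longrightarrow> u \<bullet> (y *v v) = 0"
    and t: "t \<in> T"
  shows "t \<bullet> (y *v t) \<noteq> 0"
proof
  assume tt: "t \<bullet> (y *v t) = 0"
  have "\<forall>s\<in>T. (y *v t) \<bullet> s = 0"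
  proof
    fix s assume "s \<in> T"
    hence "t \<bullet> (y *v s) = 0" using tt T(3) t by (cases "s = t") auto
    thus "(y *v t) \<bullet> s = 0" using Bsym[OF sy, of t s] by (simp add: inner_commute)
  qed
  moreover have "linear (\<lambda>s. (y *v t) \<bullet> s)" by (rule bounded_linear.linear[OF bounded_linear_inner_right])
  ultimately have "(y *v t) \<bullet> s = 0" if "s \<in> span T" for s
    using linear_eq_0_on_span that by blast
  hence "(y *v t) \<bullet> (y *v t) = 0" using T(2) by blast
  hence "y *v t = 0" by simp
  moreover have "invertible y" using dy invertible_det_nz by blast
  ultimately have "t = 0" using inj_matrix_vector_mult[of y] by (metis injD matrix_vector_mult_0_right)
  moreover have "0 \<notin> T" using T(1) dependent_zero by blast
  ultimately show False using t by simp
qed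



lemma quad_sum:
  assumes "finite S" "\<forall>u\<in>S. \<forall>v\<in>S. u \<noteq> v \<longrightarrow> u \<bullet> ((y::real^'n^'n) *v v) = 0"
  shows "(\<Sum>s\<in>S. c s *\<^sub>R s) \<bullet> (y *v (\<Sum>s\<in>S. c s *\<^sub>R s)) = (\<Sum>s\<in>S. (c s)^2 * (s \<bullet> (y *v s)))"
proof -
  have lin: "y *v (\<Sum>s\<in>S. c s *\<^sub>R s) = (\<Sum>t\<in>S. c t *\<^sub>R (y *v t))"
    using linear_sum[OF matrix_vector_mul_linear[of y], of "\<lambda>s. c s *\<^sub>R s" S]
    by (simp add: matrix_vector_mult_scaleR)
  have "(\<Sum>s\<in>S. c s *\<^sub>R s) \<bullet> (y *v (\<Sum>s\<in>S. c s *\<^sub>R s)) = (\<Sum>s\<in>S. (c s *\<^sub>R s) \<bullet> (\<Sum>t\<in>S. c t *\<^sub>R (y *v t)))"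
    unfolding lin by (rule inner_sum_left)
  also have "\<dots> = (\<Sum>s\<in>S. \<Sum>t\<in>S. c s * c t * (s \<bullet> (y *v t)))"
    by (simp add: inner_sum_right mult_ac)
  also have "\<dots> = (\<Sum>s\<in>S. \<Sum>t\<in>S. if t = s then (c s)^2 * (s \<bullet> (y *v s)) else 0)"
    using assms(2) by (intro sum.cong refl) (auto simp: power2_eq_square)
  also have "\<dots> = (\<Sum>s\<in>S. (c s)^2 * (s \<bullet> (y *v s)))"
    using assms(1) by simp
  finally show ?thesis .
qed

lemma span_rep:
  assumes "finite S" "v \<in> span S"
  obtains c where "v = (\<Sum>s\<in>S. c s *\<^sub>R s)"
  using assms span_finite[OF assms(1)] by auto

lemma quad_pos:
  assumes "finite S" "\<forall>u\<in>S. \<forall>v\<in>S. u \<noteq> v \<longrightarrow> u \<bullet> ((y::real^'n^'n) *v v) = 0"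
    "\<forall>s\<in>S. s \<bullet> (y *v s) > 0" "v \<in> span S" "v \<noteq> 0"
  shows "v \<bullet> (y *v v) > 0"
proof -
  obtain c where c: "v = (\<Sum>s\<in>S. c s *\<^sub>R s)" using span_rep[OF assms(1,4)] by blast
  have "\<exists>s\<in>S. c s \<noteq> 0"
  proof (rule ccontr)
    assume "\<not> ?thesis"
    hence "v = 0" unfolding c by simp
    thus False using assms(5) by simp
  qed
  then obtain s where s: "s \<in> S" "c s \<noteq> 0" by blast
  have "0 < (\<Sum>s\<in>S. (c s)^2 * (s \<bullet> (y *v s)))"
    by (rule sum_pos2[OF assms(1) s(1)]) (use s assms(3) in auto)
  thus ?thesis unfolding c quad_sum[OF assms(1,2)] .
qed

lemma quad_nonpos:
  assumes "finite S" "\<forall>u\<in>S. \<forall>v\<in>S. u \<noteq> v \<longrightarrow> u \<bullet> ((y::real^'n^'n) *v v) = 0"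
    "\<forall>s\<in>S. s \<bullet> (y *v s) < 0" "v \<in> span S"
  shows "v \<bullet> (y *v v) \<le> 0"
proof -
  obtain c where c: "v = (\<Sum>s\<in>S. c s *\<^sub>R s)" using span_rep[OF assms(1,4)] by blast
  have "(\<Sum>s\<in>S. (c s)^2 * (s \<bullet> (y *v s))) \<le> 0"
    by (rule sum_nonpos, rule mult_nonneg_nonpos) (use assms(3) in auto)
  thus ?thesis unfolding c quad_sum[OF assms(1,2)] .
qed

lemma dimle: "dim (V::(real^'n::finite) set) \<le> CARD('n)"
  using dim_subset_UNIV[of V] by simp

lemma sylvester_count:
  assumes sy: "sym_mat (y::real^'n^'n)" and dy: "det y \<noteq> 0"
    and T: "independent T" "UNIV \<subseteq> span T" "\<forall>u\<in>T. \<forall>v\<in>T. u \<noteq> v \<longrightarrow> u \<bullet> (y *v v) = 0"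
  shows "Max {dim V | V. subspace V \<and> posdef_on y V} = card {t\<in>T. t \<bullet> (y *v t) > 0}"
    and "card T = CARD('n)"
proof -
  define P where "P = {t\<in>T. t \<bullet> (y *v t) > 0}"
  define N where "N = {t\<in>T. t \<bullet> (y *v t) < 0}"
  have fT: "finite T" using independent_bound[OF T(1)] by blast
  have cT: "card T = CARD('n)"
  proof -
    have "span T = UNIV" using T(2) by blast
    hence "dim (UNIV::(real^'n) set) = card T" using dim_span_eq_card_independent[OF T(1)] by simp
    thus ?thesis by simp
  qed
  thus "card T = CARD('n)" .
  have nz: "t \<bullet> (y *v t) \<noteq> 0" if "t \<in> T" for t using nondeg[OF sy dy T that] .
  have "t \<in> P \<or> t \<in> N" if "t \<in> T" for t using nz[OF that] that by (auto simp: P_def N_def neq_iff)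
  hence TPN: "T = P \<union> N" "P \<inter> N = {}" by (auto simp: P_def N_def)
  have fP: "finite P" "finite N" using fT by (auto simp: P_def N_def)
  have cPN: "card P + card N = CARD('n)" using card_Un_disjoint[OF fP TPN(2)] TPN(1) cT by simp
  have iP: "independent P" "independent N" using independent_mono[OF T(1)] by (auto simp: P_def N_def)
  have oP: "\<forall>u\<in>P. \<forall>v\<in>P. u \<noteq> v \<longrightarrow> u \<bullet> (y *v v) = 0" "\<forall>u\<in>N. \<forall>v\<in>N. u \<noteq> v \<longrightarrow> u \<bullet> (y *v v) = 0"
    using T(3) by (auto simp: P_def N_def)
  define D where "D = {dim V | V. subspace V \<and> posdef_on y V}"
  have fD: "finite D"
  proof (rule finite_subset)
    show "D \<subseteq> {..CARD('n)}" by (auto simp: D_def dimle)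
  qed simp
  have PD: "card P \<in> D"
  proof -
    have "posdef_on y (span P)"
      unfolding posdef_on_def using quad_pos[OF fP(1) oP(1)] by (auto simp: P_def)
    moreover have "dim (span P) = card P" by (rule dim_span_eq_card_independent[OF iP(1)])
    ultimately show ?thesis unfolding D_def by (metis (mono_tags, lifting) mem_Collect_eq subspace_span)
  qed
  have le: "d \<le> card P" if "d \<in> D" for d
  proof -
    obtain V where V: "d = dim V" "subspace V" "posdef_on y V" using \<open>d \<in> D\<close> by (auto simp: D_def)
    have "V \<inter> span N \<subseteq> {0}"
    proof
      fix w assume w: "w \<in> V \<inter> span N"
      show "w \<in> {0}"
      proof (rule ccontr)
        assume "w \<notin> {0}"
        hence "w \<noteq> 0" by simp
        hence "w \<bullet> (y *v w) > 0" using V(3) w unfolding posdef_on_def by blast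
        moreover have "w \<bullet> (y *v w) \<le> 0" using quad_nonpos[OF fP(2) oP(2)] w by (auto simp: N_def)
        ultimately show False by simp
      qed
    qed
    hence "V \<inter> span N = {0}" using V(2) by (auto simp: subspace_0)
    hence d0: "dim (V \<inter> span N) = 0" by (metis dim_span span_empty dim_empty)
    have "dim {x + z |x z. x \<in> V \<and> z \<in> span N} + dim (V \<inter> span N) = dim V + dim (span N)"
      by (rule dim_sums_Int[OF V(2) subspace_span])
    moreover have "dim {x + z |x z. x \<in> V \<and> z \<in> span N} \<le> CARD('n)"
      using dim_subset_UNIV[of "{x + z |x z. x \<in> V \<and> z \<in> span N}"] by simp
    moreover have "dim (span N) = card N" by (rule dim_span_eq_card_independent[OF iP(2)])
    ultimately show ?thesis using d0 cPN V(1) by linarith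
  qed
  show "Max {dim V | V. subspace V \<and> posdef_on y V} = card {t\<in>T. t \<bullet> (y *v t) > 0}"
    unfolding D_def[symmetric] P_def[symmetric] using fD le PD by (intro Max_eqI) auto
qed



lemma card_Iplus:
  assumes "npos \<le> CARD('n::{finite,linorder})"
  shows "card {h::'n. card {h'. h' \<le> h} \<le> npos} = npos"
proof -
  define rk where "rk = (\<lambda>h::'n. card {h'. h' \<le> h})"
  have mono: "rk h < rk k" if "h < k" for h k
  proof -
    have a: "{h'. h' \<le> h} \<subseteq> {h'. h' \<le> k}" using that by auto
    have b: "k \<notin> {h'. h' \<le> h}" using that by auto
    have "{h'. h' \<le> h} \<subset> {h'. h' \<le> k}" using a b by blast
    thus ?thesis unfolding rk_def by (rule psubset_card_mono[OF finite])
  qed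
  have inj: "inj rk"
  proof (rule injI)
    fix h k assume "rk h = rk k"
    thus "h = k" using mono[of h k] mono[of k h] by (cases h k rule: linorder_cases) auto
  qed
  have sub: "range rk \<subseteq> {1..CARD('n)}"
  proof
    fix m assume "m \<in> range rk"
    then obtain h where h: "m = rk h" by blast
    have "0 < rk h" unfolding rk_def card_gt_0_iff by auto
    moreover have "rk h \<le> CARD('n)" unfolding rk_def by (rule card_mono) auto
    ultimately show "m \<in> {1..CARD('n)}" using h by auto
  qed
  have "card (range rk) = CARD('n)" using card_image[OF inj] by simp
  hence rng: "range rk = {1..CARD('n)}" using sub by (intro card_subset_eq) auto
  have "rk ` {h. rk h \<le> npos} = {1..npos}"
  proof
    show "rk ` {h. rk h \<le> npos} \<subseteq> {1..npos}"
    proof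
      fix m assume "m \<in> rk ` {h. rk h \<le> npos}"
      then obtain h where h: "m = rk h" "rk h \<le> npos" by blast
      moreover have "rk h \<in> {1..CARD('n)}" using sub by blast
      ultimately show "m \<in> {1..npos}" by auto
    qed
    show "{1..npos} \<subseteq> rk ` {h. rk h \<le> npos}"
    proof
      fix m assume m: "m \<in> {1..npos}"
      hence "m \<in> range rk" using rng assms by auto
      then obtain h where "m = rk h" by blast
      thus "m \<in> rk ` {h. rk h \<le> npos}" using m by auto
    qed
  qed
  hence "card (rk ` {h. rk h \<le> npos}) = npos" by simp
  moreover have "card (rk ` {h. rk h \<le> npos}) = card {h. rk h \<le> npos}"
    by (rule card_image) (rule inj_on_subset[OF inj], simp)
  ultimately show ?thesis unfolding rk_def by simp
qed

lemma gram_entry: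
  "(transpose (\<chi> i h. e h $ i :: real^'n^'n) ** ((y::real^'n^'n) ** (\<chi> i h. e h $ i))) $ h $ k = e h \<bullet> (y *v e k)"
  by (simp add: matrix_matrix_mult_def transpose_def inner_vec_def matrix_vector_mult_def)

lemma exists_frame:
  assumes npos: "npos \<le> CARD('n)" and yf: "y \<in> metric_fibre npos"
  shows "\<exists>E. invertible E \<and> qmat npos E = (y::('n::{finite,linorder}) mat)"
proof -
  have sy: "sym_mat y" and dy: "det y \<noteq> 0" and np: "npos = Max {dim V | V. subspace V \<and> posdef_on y V}"
    using yf by (auto simp: metric_fibre_def)
  obtain T where T: "independent T" "UNIV \<subseteq> span T" "\<forall>u\<in>T. \<forall>v\<in>T. u \<noteq> v \<longrightarrow> u \<bullet> (y *v v) = 0"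
    using orth_basis[OF sy subspace_UNIV] by blast
  define P where "P = {t\<in>T. t \<bullet> (y *v t) > 0}"
  define N where "N = {t\<in>T. t \<bullet> (y *v t) < 0}"
  have cP: "card P = npos" using sylvester_count(1)[OF sy dy T] np by (simp add: P_def)
  have cT: "card T = CARD('n)" using sylvester_count(2)[OF sy dy T] .
  have fT: "finite T" using independent_bound[OF T(1)] by blast
  have nz: "t \<bullet> (y *v t) \<noteq> 0" if "t \<in> T" for t using nondeg[OF sy dy T that] .
  have "t \<in> P \<or> t \<in> N" if "t \<in> T" for t using nz[OF that] that by (auto simp: P_def N_def neq_iff)
  hence TPN: "T = P \<union> N" "P \<inter> N = {}" by (auto simp: P_def N_def)
  have fP: "finite P" "finite N" using fT by (auto simp: P_def N_def)
  have cN: "card N = CARD('n) - npos" using card_Un_disjoint[OF fP TPN(2)] TPN(1) cT cP by simp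
  define I where "I = {h::'n. card {h'. h' \<le> h} \<le> npos}"
  have cI: "card I = npos" unfolding I_def by (rule card_Iplus[OF npos])
  have cI': "card (- I) = CARD('n) - npos" using cI by (simp add: Compl_eq_Diff_UNIV card_Diff_subset)
  obtain f1 where f1: "bij_betw f1 I P" using finite_same_card_bij[of I P] fP cI cP by auto
  obtain f2 where f2: "bij_betw f2 (- I) N" using finite_same_card_bij[of "- I" N] fP cI' cN by auto
  define phi where "phi = (\<lambda>h. if h \<in> I then f1 h else f2 h)"
  have phiI: "phi h \<in> P" if "h \<in> I" for h using that f1 by (auto simp: phi_def bij_betw_def)
  have phiN: "phi h \<in> N" if "h \<notin> I" for h using that f2 by (auto simp: phi_def bij_betw_def)
  have phiT: "phi h \<in> T" for h using phiI phiN by (cases "h \<in> I") (auto simp: P_def N_def)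
  have phi_inj: "phi h \<noteq> phi k" if "h \<noteq> k" for h k
  proof (cases "h \<in> I")
    case True
    show ?thesis
    proof (cases "k \<in> I")
      case True
      thus ?thesis using \<open>h \<in> I\<close> \<open>h \<noteq> k\<close> f1 by (auto simp: phi_def bij_betw_def inj_on_def)
    next
      case False
      thus ?thesis using phiI[OF \<open>h \<in> I\<close>] phiN[OF False] TPN(2) by auto
    qed
  next
    case hN: False
    show ?thesis
    proof (cases "k \<in> I")
      case True
      thus ?thesis using phiI[OF True] phiN[OF hN] TPN(2) by auto
    next
      case False
      thus ?thesis using hN \<open>h \<noteq> k\<close> f2 by (auto simp: phi_def bij_betw_def inj_on_def)
    qed
  qed
  define b where "b = (\<lambda>h. phi h \<bullet> (y *v phi h))"
  have bpos: "b h > 0" if "h \<in> I" for h using phiI[OF that] by (simp add: b_def P_def)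
  have bneg: "b h < 0" if "h \<notin> I" for h using phiN[OF that] by (simp add: b_def N_def)
  have bsgn: "b h = (if h \<in> I then \<bar>b h\<bar> else - \<bar>b h\<bar>)" and bnz: "b h \<noteq> 0" for h
    using bpos[of h] bneg[of h] by (cases "h \<in> I"; simp)+
  define e where "e = (\<lambda>h. (1 / sqrt \<bar>b h\<bar>) *\<^sub>R phi h)"
  have Be: "e h \<bullet> (y *v e k) = Smat npos $ h $ k" for h k
  proof (cases "h = k")
    case True
    have "e h \<bullet> (y *v e h) = (1 / sqrt \<bar>b h\<bar>) * (1 / sqrt \<bar>b h\<bar>) * b h"
      by (simp add: e_def b_def matrix_vector_mult_scaleR)
    also have "\<dots> = b h / \<bar>b h\<bar>"
      using bnz[of h] by (simp add: real_sqrt_mult[symmetric] field_simps)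
    also have "\<dots> = eps npos h"
      using bnz[of h] bsgn[of h] unfolding eps_def I_def by (auto split: if_splits)
    finally show ?thesis using True by (simp add: Smat_def)
  next
    case False
    have "phi h \<bullet> (y *v phi k) = 0" using T(3) phiT phi_inj[OF False] by blast
    thus ?thesis using False by (simp add: e_def Smat_def matrix_vector_mult_scaleR)
  qed
  define E where "E = (\<chi> i h. e h $ i :: 'n mat)"
  have G: "transpose E ** (y ** E) = Smat npos"
    unfolding E_def by (simp add: vec_eq_iff gram_entry Be)
  have dS: "det (Smat npos :: 'n mat) \<noteq> 0"
  proof -
    have "det (Smat npos :: 'n mat) = (\<Prod>i\<in>(UNIV::'n set). eps npos i)"
      by (subst det_diagonal) (auto simp: Smat_def)
    thus ?thesis by (simp add: eps_def)
  qed
  have "det E * (det y * det E) \<noteq> 0" using dS unfolding G[symmetric] det_mul det_transpose .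
  hence "det E \<noteq> 0" by simp
  hence iE: "invertible E" by (simp add: invertible_det_nz)
  define W where "W = matrix_inv E"
  have EW: "E ** W = mat 1" using inv_props[OF iE] W_def by simp
  have "qmat npos E = transpose W ** (Smat npos ** W)" unfolding W_def by (rule qmat_eq)
  also have "\<dots> = transpose W ** ((transpose E ** (y ** E)) ** W)" unfolding G ..
  also have "\<dots> = transpose (E ** W) ** (y ** (E ** W))"
    by (simp add: matrix_transpose_mul matrix_mul_assoc)
  also have "\<dots> = y" by (simp add: EW)
  finally show ?thesis using iE by blast
qed



lemma sym_entry: "sym_mat y \<Longrightarrow> y $ a $ b = y $ b $ a"
  unfolding sym_mat_def by (metis transpose_def vec_lambda_beta)

lemma CM_expand:
  fixes y :: "('n::{finite,linorder}) mat"
  shows "CM_at npos G y A \<longleftrightarrow> (\<forall>xi E. invertible E \<longrightarrow> qmat npos E = y \<longrightarrow>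
      (\<forall>a b. (\<Sum>k\<in>UNIV. G (min a b) (max a b) k * xi $ k) = - (y ** Bmat A xi + transpose (Bmat A xi) ** y) $ a $ b))"
proof -
  have key: "gammaM G (xi, eta) = (xi, eta) - qstar npos E (hlift A E xi) \<longleftrightarrow>
      (\<forall>a b. (\<Sum>k\<in>UNIV. G (min a b) (max a b) k * xi $ k) = - (y ** Bmat A xi + transpose (Bmat A xi) ** y) $ a $ b)"
    if "invertible E" "qmat npos E = y" for xi :: "'n vect" and eta :: "'n mat" and E :: "'n mat"
  proof -
    have fd: "frechet_derivative (qmat npos) (at E) (snd (hlift A E xi)) = y ** Bmat A xi + transpose (Bmat A xi) ** y"
      using D_formula[OF that(1), of npos A xi] that(2) by simp
    have "fst (hlift A E xi) = xi" by (simp add: hlift_def)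
    hence q: "qstar npos E (hlift A E xi) = (xi, y ** Bmat A xi + transpose (Bmat A xi) ** y)"
      unfolding qstar_def fd by simp
    show ?thesis unfolding q gammaM_def by (simp add: vec_eq_iff)
  qed
  have s0: "sym_mat (0::('n::{finite,linorder}) mat)" by (simp add: sym_mat_def transpose_def vec_eq_iff)
  show ?thesis unfolding CM_at_def
  proof (intro iffI allI impI)
    fix xi :: "'n vect" and E :: "'n mat" and a b assume H: "\<forall>xi eta E. sym_mat eta \<longrightarrow> invertible E \<longrightarrow> qmat npos E = y \<longrightarrow>
        gammaM G (xi, eta) = (xi, eta) - qstar npos E (hlift A E xi)"
      and E: "invertible E" "qmat npos E = y"
    show "(\<Sum>k\<in>UNIV. G (min a b) (max a b) k * xi $ k) = - (y ** Bmat A xi + transpose (Bmat A xi) ** y) $ a $ b"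
      using H[rule_format, OF s0 E] key[OF E] by blast
  next
    fix xi :: "'n vect" and eta :: "'n mat" and E :: "'n mat" assume H: "\<forall>xi E. invertible E \<longrightarrow> qmat npos E = y \<longrightarrow>
      (\<forall>a b. (\<Sum>k\<in>UNIV. G (min a b) (max a b) k * xi $ k) = - (y ** Bmat A xi + transpose (Bmat A xi) ** y) $ a $ b)"
      and "sym_mat eta" and E: "invertible E" "qmat npos E = y"
    show "gammaM G (xi, eta) = (xi, eta) - qstar npos E (hlift A E xi)"
      using H[rule_format, OF E] key[OF E] by blast
  qed
qed

lemma mm_entry: "((X::real^'n^'m) ** (Y::real^'k^'n)) $ a $ b = (\<Sum>c\<in>UNIV. X $ a $ c * Y $ c $ b)"
  by (simp add: matrix_matrix_mult_def)

lemma comp_formula: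
  assumes "sym_mat y"
  shows "(y ** Bmat A xi + transpose (Bmat A xi) ** y) $ a $ b
       = (\<Sum>m\<in>UNIV. (\<Sum>c\<in>UNIV. y $ c $ b * A c m a + y $ c $ a * A c m b) * xi $ m)"
proof -
  have B: "Bmat A xi $ c $ d = (\<Sum>m\<in>UNIV. A c m d * xi $ m)" for c d by (simp add: Bmat_def)
  have r1: "(\<Sum>c\<in>UNIV. y $ a $ c * (\<Sum>m\<in>UNIV. A c m b * xi $ m)) = (\<Sum>m\<in>UNIV. \<Sum>c\<in>UNIV. y $ c $ a * A c m b * xi $ m)"
  proof -
    have "(\<Sum>c\<in>UNIV. y $ a $ c * (\<Sum>m\<in>UNIV. A c m b * xi $ m)) = (\<Sum>c\<in>UNIV. \<Sum>m\<in>UNIV. y $ c $ a * A c m b * xi $ m)"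
      by (simp add: sum_distrib_left sym_entry[OF assms, of a] mult.assoc)
    also have "\<dots> = (\<Sum>m\<in>UNIV. \<Sum>c\<in>UNIV. y $ c $ a * A c m b * xi $ m)" by (rule sum.swap)
    finally show ?thesis .
  qed
  have r2: "(\<Sum>c\<in>UNIV. (\<Sum>m\<in>UNIV. A c m a * xi $ m) * y $ c $ b) = (\<Sum>m\<in>UNIV. \<Sum>c\<in>UNIV. y $ c $ b * A c m a * xi $ m)"
  proof -
    have "(\<Sum>c\<in>UNIV. (\<Sum>m\<in>UNIV. A c m a * xi $ m) * y $ c $ b) = (\<Sum>c\<in>UNIV. \<Sum>m\<in>UNIV. y $ c $ b * A c m a * xi $ m)"
      unfolding sum_distrib_right by (intro sum.cong refl) (simp add: mult_ac)
    also have "\<dots> = (\<Sum>m\<in>UNIV. \<Sum>c\<in>UNIV. y $ c $ b * A c m a * xi $ m)" by (rule sum.swap)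
    finally show ?thesis .
  qed
  have r3: "(\<Sum>m\<in>UNIV. (\<Sum>c\<in>UNIV. y $ c $ b * A c m a + y $ c $ a * A c m b) * xi $ m)
     = (\<Sum>m\<in>UNIV. \<Sum>c\<in>UNIV. y $ c $ b * A c m a * xi $ m) + (\<Sum>m\<in>UNIV. \<Sum>c\<in>UNIV. y $ c $ a * A c m b * xi $ m)"
    by (simp only: sum_distrib_right distrib_right sum.distrib)
  have tr: "transpose (Bmat A xi) $ i $ j = Bmat A xi $ j $ i" for i j by (simp add: transpose_def)
  show ?thesis unfolding r3 vector_add_component mm_entry tr B r1 r2 by (rule add.commute)
qed

lemma sum_axis: "(\<Sum>m\<in>UNIV. f m * axis j (1::real) $ m) = f j"
proof -
  have "\<And>m. f m * axis j (1::real) $ m = (if m = j then f m else 0)" by (simp add: axis_def)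
  thus ?thesis by simp
qed

theorem proposition3:
  fixes npos :: nat
    and U :: "('n::{finite,linorder}) vect set"
    and G :: "'n vect \<Rightarrow> 'n mat \<Rightarrow> ('n \<Rightarrow> 'n \<Rightarrow> 'n \<Rightarrow> real)
              \<Rightarrow> 'n \<Rightarrow> 'n \<Rightarrow> 'n \<Rightarrow> real"
  assumes "npos \<le> CARD('n)"
  shows "(\<forall>x\<in>U. \<forall>y\<in>metric_fibre npos. \<forall>A. CM_at npos (G x y A) y A)
     \<longleftrightarrow> (\<forall>x\<in>U. \<forall>y\<in>metric_fibre npos. \<forall>A. \<forall>j k l. k \<le> l \<longrightarrow>
            G x y A k l j = - (\<Sum>a\<in>UNIV. y $ a $ l * A a j k + y $ a $ k * A a j l))"
proof (intro iffI ballI allI impI)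
  fix x and y :: "'n mat" and A j k l
  assume H: "\<forall>x\<in>U. \<forall>y\<in>metric_fibre npos. \<forall>A. CM_at npos (G x y A) y A"
    and x: "x \<in> U" and y: "y \<in> metric_fibre npos" and kl: "(k::'n) \<le> l"
  have sy: "sym_mat y" using y by (simp add: metric_fibre_def)
  obtain E where E: "invertible E" "qmat npos E = y" using exists_frame[OF assms y] by blast
  have mk: "min k l = k" using kl by (rule min_absorb1)
  have ml: "max k l = l" using kl by (rule max_absorb2)
  have eq: "(\<Sum>m\<in>UNIV. G x y A (min k l) (max k l) m * axis j 1 $ m)
      = - (y ** Bmat A (axis j 1) + transpose (Bmat A (axis j 1)) ** y) $ k $ l"
    using H x y E unfolding CM_expand by blast
  from eq show "G x y A k l j = - (\<Sum>a\<in>UNIV. y $ a $ l * A a j k + y $ a $ k * A a j l)"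
    by (simp only: mk ml comp_formula[OF sy] sum_axis)
next
  fix x and y :: "'n mat" and A
  assume H: "\<forall>x\<in>U. \<forall>y\<in>metric_fibre npos. \<forall>A. \<forall>j k l. k \<le> l \<longrightarrow>
            G x y A k l j = - (\<Sum>a\<in>UNIV. y $ a $ l * A a j k + y $ a $ k * A a j l)"
    and x: "x \<in> U" and y: "y \<in> metric_fibre npos"
  have sy: "sym_mat y" using y by (simp add: metric_fibre_def)
  have G: "\<And>j k l. k \<le> l \<Longrightarrow> G x y A k l j = - (\<Sum>c\<in>UNIV. y $ c $ l * A c j k + y $ c $ k * A c j l)"
    using H x y by blast
  show "CM_at npos (G x y A) y A"
    unfolding CM_expand
  proof (intro allI impI)
    fix xi a b
    show "(\<Sum>k\<in>UNIV. G x y A (min a b) (max a b) k * xi $ k) = - (y ** Bmat A xi + transpose (Bmat A xi) ** y) $ a $ b"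
    proof (cases "a \<le> b")
      case True
      have mk: "min a b = a" using True by (rule min_absorb1)
      have ml: "max a b = b" using True by (rule max_absorb2)
      show ?thesis by (simp only: mk ml G[OF True] comp_formula[OF sy] mult_minus_left sum_negf)
    next
      case False
      hence ba: "b \<le> a" by simp
      have mk: "min a b = b" using ba by (rule min_absorb2)
      have ml: "max a b = a" using ba by (rule max_absorb1)
      have c: "(\<Sum>c\<in>UNIV. y $ c $ a * A c m b + y $ c $ b * A c m a) = (\<Sum>c\<in>UNIV. y $ c $ b * A c m a + y $ c $ a * A c m b)" for m
        by (intro sum.cong refl) (rule add.commute)
      show ?thesis by (simp only: mk ml G[OF ba] c comp_formula[OF sy] mult_minus_left sum_negf)
    qed
  qed
qed


end
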